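(* Assume the standing setting below and run the DMFW algorithm with $\eta_k=\frac{2}{k+2}$ (and any $\gamma_k\in(0,1]$). Then for every $i\in\mathcal N$ and $k\ge1$, $$\|\hat x_{k+1}^i-\hat x_k^i\|\le\frac{2(D+2C_1)}{k+2},\qquad C_1=k_0\sqrt nD.$$
   Context: Setting. There are $n$ agents $\mathcal N=\{1,\dots,n\}$ connected by a connected graph $\mathcal G=(\mathcal N,\mathcal E)$ with weight matrix $C=[c_{ij}]\in\mathbb R^{n\times n}$, where $c_{ij}\ge 0$ and $c_{ij}=0$ whenever $j\ne i$ and $(i,j)\notin\mathcal E$. $C$ is doubly stochastic, i.e. all row sums and all column sums equal $1$. Let $\lambda$ be the second largest eigenvalue of $C$ in magnitude. It is assumed that $|\lambda|<1$ and that for all vectors $x^1,\dots,x^n\in\mathbb R^p$, with $\bar x=\frac1n\sum_i x^i$ and $\hat x^i=\sum_j c_{ij}x^j$, one has $\big(\sum_i\|\hat x^i-\bar x\|^2\big)^{1/2}\le|\lambda|\big(\sum_i\|x^i-\bar x\|^2\big)^{1/2}$. Let $k_0$ be the smallest positive integer with $|\lambda|\le (k_0/(k_0+1))^2$. Problem data. $\mathcal X\subset\mathbb R^p$ is convex and compact with diameter $D$, i.e. $\|x-x'\|\le D$ for all $x,x'\in\mathcal X$. For each $i$, $\xi^i$ is a random variable. The function $f_i(\cdot,\xi)$ is differentiable with $L$-Lipschitz gradient for every $\xi$. $F_i(x)=\mathbb E[f_i(x,\xi^i)]$ is differentiable with $\nabla F_i(x)=\mathbb E[\nabla f_i(x,\xi^i)]$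 and $L$-Lipschitz gradient. For all $x\in\mathcal X$ and $i$, $\mathbb E\|\nabla F_i(x)-\nabla f_i(x,\xi^i)\|^2\le\delta^2$. Set $F=\frac1n\sum_{i=1}^nF_i$. DMFW algorithm. Fix step sizes $\gamma_k,\eta_k\in(0,1]$ and deterministic initial points $x_1^i\in\mathcal X$. The samples $\xi_k^i$ ($k\ge1$, $i\in\mathcal N$) are mutually independent, and $\xi_k^i$ has the distribution of $\xi^i$. For $k=1,2,\dots$ and each $i$: - $\hat x_k^i=\sum_{j=1}^n c_{ij}x_k^j$. - For $k=1$: $y_1^i=s_1^i=\nabla f_i(\hat x_1^i,\xi_1^i)$. For $k\ge2$: $y_k^i=(1-\gamma_k)y_{k-1}^i+\nabla f_i(\hat x_k^i,\xi_k^i)-(1-\gamma_k)\nabla f_i(\hat x_{k-1}^i,\xi_k^i)$ and $s_k^i=\sum_j c_{ij}s_{k-1}^j+y_k^i-y_{k-1}^i$. - $p_k^i=\sum_j c_{ij}s_k^j$. - $\theta_k^i\in\arg\min_{\phi\in\mathcal X}\langle p_k^i,\phi\rangle$. - $x_{k+1}^i=\hat x_k^i+\eta_k(\theta_k^i-\hat x_k^i)$. Notation: $\bar x_k=\frac1n\sum_i x_k^i$. *)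

theory Defs
  imports "HOL-Analysis.Analysis"
begin

definition doubly_stochastic :: "nat \<Rightarrow> (nat \<Rightarrow> nat \<Rightarrow> real) \<Rightarrow> bool" where
  "doubly_stochastic n C \<longleftrightarrow>
     (\<forall>i<n. \<forall>j<n. 0 \<le> C i j) \<and>
     (\<forall>i<n. (\<Sum>j<n. C i j) = 1) \<and>
     (\<forall>j<n. (\<Sum>i<n. C i j) = 1)"

definition connected_graph :: "nat \<Rightarrow> (nat \<times> nat) set \<Rightarrow> bool" where
  "connected_graph n E \<longleftrightarrow>
     E \<subseteq> {..<n} \<times> {..<n} \<and> sym E \<and>
     (\<forall>i<n. \<forall>j<n. (i, j) \<in> E\<^sup>*)"

definition avg :: "nat \<Rightarrow> (nat \<Rightarrow> 'a::real_vector) \<Rightarrow> 'a" where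
  "avg n z = (1 / real n) *\<^sub>R (\<Sum>i<n. z i)"

definition mix :: "nat \<Rightarrow> (nat \<Rightarrow> nat \<Rightarrow> real) \<Rightarrow> (nat \<Rightarrow> 'a::real_vector) \<Rightarrow> nat \<Rightarrow> 'a" where
  "mix n C z i = (\<Sum>j<n. C i j *\<^sub>R z j)"

text \<open>Contraction property of the mixing matrix with factor lam (= |lambda|).\<close>
definition mixing_contraction :: "nat \<Rightarrow> (nat \<Rightarrow> nat \<Rightarrow> real) \<Rightarrow> real \<Rightarrow> 'a::real_normed_vector itself \<Rightarrow> bool" where
  "mixing_contraction n C lam _ \<longleftrightarrow>
     (\<forall>z :: nat \<Rightarrow> 'a.
        sqrt (\<Sum>i<n. (norm (mix n C z i - avg n z))\<^sup>2)
          \<le> lam * sqrt (\<Sum>i<n. (norm (z i - avg n z))\<^sup>2))"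

definition k0_of :: "real \<Rightarrow> nat" where
  "k0_of lam = (LEAST k::nat. 0 < k \<and> lam \<le> (real k / (real k + 1))\<^sup>2)"

end

theory Submission imports Defs "HOL-Analysis.Analysis" begin

lemma convex_comb:
  fixes n :: nat
  assumes "convex X" "\<forall>j<n. 0 \<le> c j" "(\<Sum>j<n. c j) = 1" "\<forall>j<n. z j \<in> X"
  shows "(\<Sum>j<n. c j *\<^sub>R z j) \<in> X"
  using assms by (intro convex_sum) auto

lemma avg_in:
  fixes n :: nat
  assumes "convex X" "0 < n" "\<forall>j<n. z j \<in> X"
  shows "avg n z \<in> X"
proof -
  have "avg n z = (\<Sum>j<n. (1/real n) *\<^sub>R z j)"
    unfolding avg_def by (simp add: scaleR_sum_right)
  also have "\<dots> \<in> X" using assms by (intro convex_comb) auto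
  finally show ?thesis .
qed

lemma avg_cong: "(\<And>i. i < n \<Longrightarrow> z i = w i) \<Longrightarrow> avg n z = avg n w"
  unfolding avg_def by simp

lemma avg_mix:
  assumes "doubly_stochastic n C"
  shows "avg n (mix n C z) = avg n z"
proof -
  have "(\<Sum>i<n. mix n C z i) = (\<Sum>j<n. (\<Sum>i<n. C i j) *\<^sub>R z j)"
  proof -
    have "(\<Sum>i<n. mix n C z i) = (\<Sum>i<n. \<Sum>j<n. C i j *\<^sub>R z j)" unfolding mix_def by simp
    also have "\<dots> = (\<Sum>j<n. \<Sum>i<n. C i j *\<^sub>R z j)" by (rule sum.swap)
    also have "\<dots> = (\<Sum>j<n. (\<Sum>i<n. C i j) *\<^sub>R z j)" by (simp add: scaleR_sum_left)
    finally show ?thesis .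
  qed
  also have "\<dots> = (\<Sum>j<n. z j)" using assms unfolding doubly_stochastic_def by simp
  finally show ?thesis unfolding avg_def by simp
qed

lemma avg_lin: "avg n (\<lambda>i. a *\<^sub>R z i + b *\<^sub>R w i) = a *\<^sub>R avg n z + b *\<^sub>R avg n w"
  unfolding avg_def by (simp add: sum.distrib scaleR_sum_right algebra_simps)
lemma k0_props:
  assumes "0 \<le> lam" "lam < 1"
  shows "0 < k0_of lam \<and> lam \<le> (real (k0_of lam) / (real (k0_of lam) + 1))\<^sup>2"
proof -
  define m where "m = nat \<lceil>2 / (1 - lam)\<rceil>"
  have m2: "real m \<ge> 2 / (1 - lam)" unfolding m_def by linarith
  have pos: "2 / (1 - lam) \<ge> 2" using assms by (simp add: field_simps)
  hence mpos: "0 < m" using m2 by linarith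
  have "2 / (real m + 1) \<le> 1 - lam"
  proof -
    have "2 \<le> real m * (1 - lam)" using m2 assms by (simp add: field_simps)
    hence "2 \<le> (real m + 1) * (1 - lam)" using assms by (simp add: algebra_simps)
    thus ?thesis by (simp add: divide_le_eq mult.commute)
  qed
  hence "1 - 2 / (real m + 1) \<ge> lam" by linarith
  also have "1 - 2 / (real m + 1) \<le> (real m / (real m + 1))\<^sup>2"
  proof -
    define r where "r = 1 / (real m + 1)"
    have "real m / (real m + 1) = 1 - r" unfolding r_def by (simp add: field_simps)
    moreover have "2 / (real m + 1) = 2 * r" unfolding r_def by simp
    moreover have "1 - 2 * r \<le> (1 - r)\<^sup>2" by (simp add: power2_eq_square algebra_simps)
    ultimately show ?thesis by simp
  qed
  finally have "0 < m \<and> lam \<le> (real m / (real m + 1))\<^sup>2" using mpos by simp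
  thus ?thesis unfolding k0_of_def by (rule LeastI)
qed

lemma base_arith:
  fixes K k :: nat and lam B :: real
  assumes K: "1 \<le> K" "k \<le> K" and lam: "0 \<le> lam" "lam \<le> (real K / (real K + 1))\<^sup>2"
    and B: "0 \<le> B"
  shows "lam * B \<le> 2 * (real K * B) / (real k + 2)"
proof -
  have q0: "0 \<le> real K / (real K + 1)" "real K / (real K + 1) \<le> 1" by auto
  have "(real K / (real K + 1))\<^sup>2 \<le> real K / (real K + 1)"
    unfolding power2_eq_square by (rule mult_left_le[OF q0(2) q0(1)])
  also have "\<dots> \<le> 2 * real K / (real K + 2)"
    by (simp add: divide_simps) (simp add: algebra_simps)
  also have "\<dots> \<le> 2 * real K / (real k + 2)" using K by (simp add: frac_le)
  finally have "lam \<le> 2 * real K / (real k + 2)" using lam by linarith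
  hence "lam * B \<le> 2 * real K / (real k + 2) * B" using B by (rule mult_right_mono)
  thus ?thesis by simp
qed
lemma t1:
  fixes k K :: nat and B :: real
  shows "(1 - 2 / (real k + 2)) * (2 * (real K * B) / (real k + 2)) + 2 / (real k + 2) * B
      = 2 * B * (real k * real K + real k + 2) / (real k + 2)^2"
proof -
  define t where "t = real k + 2"
  have t0: "t \<noteq> 0" unfolding t_def by simp
  have k: "real k = t - 2" unfolding t_def by simp
  show ?thesis unfolding k t_def[symmetric] using t0
    by (simp add: field_simps power2_eq_square)
qed

lemma t2:
  fixes k K :: nat and B Q :: real
  assumes B: "0 \<le> B" and Q: "real K * Q * (real k + 3) \<le> ((real K + 1) * (real k + 2)) * ((real K + 1) * (real k + 2))"
  shows "(real K / (real K + 1))\<^sup>2 * (2 * B * Q / (real k + 2)^2) \<le> 2 * (real K * B) / (real (k+1) + 2)"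
proof -
  have e1: "(real K / (real K + 1))\<^sup>2 * (2 * B * Q / (real k + 2)^2) = (2 * B * real K) * (real K * Q) / (((real K + 1) * (real k + 2))^2)"
  proof -
    have a: "real K + 1 \<noteq> 0" "real k + 2 \<noteq> 0" by auto
    show ?thesis using a unfolding power2_eq_square by (simp add: field_simps)
  qed
  have e2: "2 * (real K * B) / (real (k+1) + 2) = (2 * B * real K) / (real k + 3)" by (simp add: algebra_simps)
  have p: "0 < ((real K + 1) * (real k + 2))^2" "0 < real k + 3" by auto
  have "(real K * Q) / (((real K + 1) * (real k + 2))^2) \<le> 1 / (real k + 3)"
    using Q p by (simp add: divide_simps power2_eq_square)
  hence "(2 * B * real K) * ((real K * Q) / (((real K + 1) * (real k + 2))^2)) \<le> (2 * B * real K) * (1 / (real k + 3))"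
    using B by (intro mult_left_mono) auto
  thus ?thesis unfolding e1 e2 by simp
qed

lemma step_arith:
  fixes K k :: nat and lam B Ek :: real
  assumes K: "1 \<le> K" "K \<le> k" and lam: "0 \<le> lam" "lam \<le> (real K / (real K + 1))\<^sup>2"
    and B: "0 \<le> B" and Ek: "0 \<le> Ek" "Ek \<le> 2 * (real K * B) / (real k + 2)"
  shows "lam * ((1 - 2 / (real k + 2)) * Ek + 2 / (real k + 2) * B) \<le> 2 * (real K * B) / (real (k+1) + 2)"
proof -
  have c: "0 \<le> 1 - 2 / (real k + 2)" by (simp add: field_simps)
  have "(1 - 2 / (real k + 2)) * Ek + 2 / (real k + 2) * B
        \<le> (1 - 2 / (real k + 2)) * (2 * (real K * B) / (real k + 2)) + 2 / (real k + 2) * B"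
    using c Ek by (intro add_right_mono mult_left_mono) auto
  also have "\<dots> = 2 * B * (real k * real K + real k + 2) / (real k + 2)^2"
    by (rule t1)
  finally have i1: "(1 - 2 / (real k + 2)) * Ek + 2 / (real k + 2) * B \<le> 2 * B * (real k * real K + real k + 2) / (real k + 2)^2" .
  have nn: "0 \<le> (1 - 2 / (real k + 2)) * Ek + 2 / (real k + 2) * B" using c Ek B by simp
  have "lam * ((1 - 2 / (real k + 2)) * Ek + 2 / (real k + 2) * B)
      \<le> (real K / (real K + 1))\<^sup>2 * (2 * B * (real k * real K + real k + 2) / (real k + 2)^2)"
    using lam nn i1 by (intro mult_mono) auto
  also have "\<dots> \<le> 2 * (real K * B) / (real (k+1) + 2)"
  proof (rule t2[OF B])
    have a1: "real k * real K + real k + 2 \<le> (real K + 1) * (real k + 2)" by (simp add: algebra_simps)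
    have a2: "real K * (real k + 3) \<le> (real K + 1) * (real k + 2)" using K by (simp add: algebra_simps)
    have "real K * (real k * real K + real k + 2) * (real k + 3) = (real k * real K + real k + 2) * (real K * (real k + 3))" by simp
    also have "\<dots> \<le> ((real K + 1) * (real k + 2)) * ((real K + 1) * (real k + 2))"
      by (rule mult_mono[OF a1 a2]) auto
    finally show "real K * (real k * real K + real k + 2) * (real k + 3) \<le> ((real K + 1) * (real k + 2)) * ((real K + 1) * (real k + 2))" .
  qed
  finally show ?thesis .
qed
lemma t4: fixes K k n :: nat and D :: real shows
 "2 * (real K * (sqrt (real n) * D)) / (real k + 2) + 2 * (real K * (sqrt (real n) * D)) / (real k + 2) + 2 / (real k + 2) * D
   = 2 * (D + 2 * (real K * sqrt (real n) * D)) / (real k + 2)"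
proof -
  define s where "s = real K * sqrt (real n) * D"
  define t where "t = real k + 2"
  have "2 * s / t + 2 * s / t + 2 / t * D = 2 * (D + 2 * s) / t"
    by (simp add: add_divide_distrib[symmetric] algebra_simps)
  thus ?thesis unfolding s_def t_def by (simp add: mult.assoc)
qed
lemma t5: fixes a b c :: "'a::real_normed_vector" shows
  "norm (a - b + c) \<le> norm a + norm b + norm c"
  using norm_triangle_ineq[of "a - b" c] norm_triangle_ineq4[of a b] by linarith
theorem lemma7:
  fixes n :: nat
    and E :: "(nat \<times> nat) set"
    and C :: "nat \<Rightarrow> nat \<Rightarrow> real"
    and lam :: real \<comment> \<open>modulus |lambda| of the second largest eigenvalue of C\<close>
    and X :: "'a::euclidean_space set"
    and D L :: real
    and f :: "nat \<Rightarrow> 'a \<Rightarrow> 'b \<Rightarrow> real"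
    and g :: "nat \<Rightarrow> 'a \<Rightarrow> 'b \<Rightarrow> 'a" \<comment> \<open>g i x xi = gradient of f i (.) xi at x\<close>
    and \<xi> :: "nat \<Rightarrow> nat \<Rightarrow> 'b" \<comment> \<open>realized samples xi k i\<close>
    and \<gamma> \<eta> :: "nat \<Rightarrow> real"
    and x xh y s p \<theta> :: "nat \<Rightarrow> nat \<Rightarrow> 'a" \<comment> \<open>iterates indexed (k, i)\<close>
  assumes graph: "connected_graph n E"
    and C_ds: "doubly_stochastic n C"
    and C_graph: "\<forall>i<n. \<forall>j<n. j \<noteq> i \<and> (i, j) \<notin> E \<longrightarrow> C i j = 0"
    and lam_nonneg: "0 \<le> lam" and lam_lt1: "lam < 1"
    and contraction: "mixing_contraction n C lam TYPE('a)"
    and X_convex: "convex X" and X_compact: "compact X"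
    and diam: "\<forall>u\<in>X. \<forall>v\<in>X. norm (u - v) \<le> D"
    and grad: "\<forall>i<n. \<forall>z u. ((\<lambda>v. f i v z) has_derivative (\<lambda>h. g i u z \<bullet> h)) (at u)"
    and lipschitz: "\<forall>i<n. \<forall>z u v. norm (g i u z - g i v z) \<le> L * norm (u - v)"
    and gamma: "\<forall>k\<ge>1. 0 < \<gamma> k \<and> \<gamma> k \<le> 1"
    and eta: "\<forall>k\<ge>1. \<eta> k = 2 / (real k + 2)"
    and init: "\<forall>i<n. x 1 i \<in> X"
    and xh_def: "\<forall>k\<ge>1. \<forall>i<n. xh k i = (\<Sum>j<n. C i j *\<^sub>R x k j)"
    and y1: "\<forall>i<n. y 1 i = g i (xh 1 i) (\<xi> 1 i)"
    and s1: "\<forall>i<n. s 1 i = y 1 i"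
    and yk: "\<forall>k\<ge>2. \<forall>i<n. y k i = (1 - \<gamma> k) *\<^sub>R y (k - 1) i + g i (xh k i) (\<xi> k i)
                                   - (1 - \<gamma> k) *\<^sub>R g i (xh (k - 1) i) (\<xi> k i)"
    and sk: "\<forall>k\<ge>2. \<forall>i<n. s k i = (\<Sum>j<n. C i j *\<^sub>R s (k - 1) j) + y k i - y (k - 1) i"
    and pk: "\<forall>k\<ge>1. \<forall>i<n. p k i = (\<Sum>j<n. C i j *\<^sub>R s k j)"
    and theta: "\<forall>k\<ge>1. \<forall>i<n. \<theta> k i \<in> X \<and> (\<forall>\<phi>\<in>X. p k i \<bullet> \<theta> k i \<le> p k i \<bullet> \<phi>)"
    and xk: "\<forall>k\<ge>1. \<forall>i<n. x (k + 1) i = xh k i + \<eta> k *\<^sub>R (\<theta> k i - xh k i)"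
  shows "\<forall>i<n. \<forall>k\<ge>1.
           norm (xh (k + 1) i - xh k i)
             \<le> 2 * (D + 2 * (real (k0_of lam) * sqrt (real n) * D)) / (real k + 2)"
proof (intro allI impI)
  fix i k :: nat assume i: "i < n" and k: "1 \<le> k"
  have n0: "0 < n" using i by simp
  have Crow: "\<forall>i<n. \<forall>j<n. 0 \<le> C i j" "\<forall>i<n. (\<Sum>j<n. C i j) = 1"
    using C_ds unfolding doubly_stochastic_def by auto
  have mixX: "(\<Sum>l<n. C j l *\<^sub>R z l) \<in> X" if "\<forall>l<n. z l \<in> X" "j < n" for z j
    using that Crow X_convex by (intro convex_comb) auto
  have eta01: "0 \<le> \<eta> m \<and> \<eta> m \<le> 1" if "1 \<le> m" for m
  proof -
    have "\<eta> m = 2 / (real m + 2)" using eta that by simp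
    thus ?thesis by simp
  qed
  have inX: "\<forall>j<n. x m j \<in> X \<and> xh m j \<in> X" if "1 \<le> m" for m
    using that
  proof (induction m rule: dec_induct)
    case base
    have h1: "\<forall>j<n. x 1 j \<in> X" using init by auto
    thus ?case using xh_def mixX[OF h1] by auto
  next
    case (step m)
    have h1: "\<forall>j<n. x (m+1) j \<in> X"
    proof (intro allI impI)
      fix j assume j: "j < n"
      have "x (m+1) j = (1 - \<eta> m) *\<^sub>R xh m j + \<eta> m *\<^sub>R \<theta> m j"
        using xk step(1) j by (simp add: algebra_simps)
      also have "\<dots> \<in> X"
        using X_convex step j theta eta01[of m] by (intro convexD) auto
      finally show "x (m+1) j \<in> X" .
    qed
    thus ?case using xh_def mixX[OF h1] step(1) by auto
  qed
  have D0: "0 \<le> D" using diam init n0 by force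
  define xb where "xb m = avg n (x m)" for m
  define th where "th m = avg n (\<theta> m)" for m
  define E where "E m = L2_set (\<lambda>j. norm (xh m j - xb m)) {..<n}" for m
  define e where "e m = L2_set (\<lambda>j. norm (x m j - xb m)) {..<n}" for m
  define K where "K = k0_of lam"
  define B where "B = sqrt (real n) * D"
  have B0: "0 \<le> B" using D0 unfolding B_def by simp
  have Kp: "1 \<le> K" "lam \<le> (real K / (real K + 1))\<^sup>2"
    using k0_props[OF lam_nonneg lam_lt1] unfolding K_def by auto
  have xbX: "xb m \<in> X" if "1 \<le> m" for m
    unfolding xb_def using inX[OF that] X_convex n0 by (intro avg_in) auto
  have thX: "th m \<in> X" if "1 \<le> m" for m
    unfolding th_def using theta that X_convex n0 by (intro avg_in) auto
  have Emix: "E m \<le> lam * e m" if "1 \<le> m" for m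
  proof -
    have c: "sqrt (\<Sum>i<n. (norm (mix n C (x m) i - avg n (x m)))\<^sup>2)
          \<le> lam * sqrt (\<Sum>i<n. (norm (x m i - avg n (x m)))\<^sup>2)"
      using contraction unfolding mixing_contraction_def by blast
    have "(\<Sum>i<n. (norm (mix n C (x m) i - avg n (x m)))\<^sup>2) = (\<Sum>i<n. (norm (xh m i - xb m))\<^sup>2)"
      using xh_def that unfolding mix_def xb_def by (intro sum.cong) auto
    thus ?thesis using c unfolding E_def e_def L2_set_def xb_def by simp
  qed
  have e_le: "e m \<le> B" if "1 \<le> m" for m
  proof -
    have "e m \<le> L2_set (\<lambda>_. D) {..<n}"
      unfolding e_def
      using inX[OF that] xbX[OF that] diam by (intro L2_set_mono) auto
    also have "\<dots> = B" unfolding B_def using D0 by (simp add: L2_set_constant)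
    finally show ?thesis .
  qed
  have avgxh: "avg n (xh m) = xb m" if "1 \<le> m" for m
  proof -
    have "avg n (xh m) = avg n (mix n C (x m))"
      using xh_def that unfolding mix_def by (intro avg_cong) auto
    thus ?thesis using avg_mix[OF C_ds] unfolding xb_def by simp
  qed
  have xbstep: "xb (m+1) = (1 - \<eta> m) *\<^sub>R xb m + \<eta> m *\<^sub>R th m" if "1 \<le> m" for m
  proof -
    have "xb (m+1) = avg n (\<lambda>j. (1 - \<eta> m) *\<^sub>R xh m j + \<eta> m *\<^sub>R \<theta> m j)"
      unfolding xb_def using xk that by (intro avg_cong) (simp add: algebra_simps)
    thus ?thesis unfolding avg_lin using avgxh[OF that] th_def by simp
  qed
  have erec: "e (m+1) \<le> (1 - \<eta> m) * E m + \<eta> m * B" if "1 \<le> m" for m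
  proof -
    have eq: "x (m+1) j - xb (m+1) = (1 - \<eta> m) *\<^sub>R (xh m j - xb m) + \<eta> m *\<^sub>R (\<theta> m j - th m)"
      if "j < n" for j
      using xk xbstep[OF \<open>1 \<le> m\<close>] \<open>1 \<le> m\<close> that by (simp add: algebra_simps)
    have "e (m+1) \<le> L2_set (\<lambda>j. (1 - \<eta> m) * norm (xh m j - xb m) + \<eta> m * norm (\<theta> m j - th m)) {..<n}"
      unfolding e_def
    proof (intro L2_set_mono)
      fix j assume "j \<in> {..<n}"
      thus "norm (x (m+1) j - xb (m+1)) \<le> (1 - \<eta> m) * norm (xh m j - xb m) + \<eta> m * norm (\<theta> m j - th m)"
        using eq norm_triangle_ineq[of "(1 - \<eta> m) *\<^sub>R (xh m j - xb m)" "\<eta> m *\<^sub>R (\<theta> m j - th m)"]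
          eta01[OF that] by simp
    qed simp
    also have "\<dots> \<le> L2_set (\<lambda>j. (1 - \<eta> m) * norm (xh m j - xb m)) {..<n} + L2_set (\<lambda>j. \<eta> m * norm (\<theta> m j - th m)) {..<n}"
      by (rule L2_set_triangle_ineq)
    also have "L2_set (\<lambda>j. (1 - \<eta> m) * norm (xh m j - xb m)) {..<n} = (1 - \<eta> m) * E m"
      unfolding E_def using eta01[OF that] by (simp add: L2_set_right_distrib)
    also have "L2_set (\<lambda>j. \<eta> m * norm (\<theta> m j - th m)) {..<n} \<le> L2_set (\<lambda>_. \<eta> m * D) {..<n}"
    proof (intro L2_set_mono)
      fix j assume "j \<in> {..<n}"
      hence "norm (\<theta> m j - th m) \<le> D" using theta thX[OF that] diam that by blast
      thus "\<eta> m * norm (\<theta> m j - th m) \<le> \<eta> m * D" using eta01[OF that] by (simp add: mult_left_mono)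
      show "0 \<le> \<eta> m * norm (\<theta> m j - th m)" using eta01[OF that] by simp
    qed
    also have "L2_set (\<lambda>_. \<eta> m * D) {..<n} = \<eta> m * B"
      unfolding B_def using D0 eta01[OF that] by (simp add: L2_set_constant)
    finally show ?thesis by simp
  qed
  have E0: "0 \<le> E m" for m unfolding E_def by simp
  have Eb: "E m \<le> 2 * (real K * B) / (real m + 2)" if "1 \<le> m" for m
    using that
  proof (induction m rule: dec_induct)
    case base
    have "E 1 \<le> lam * B" using Emix[of 1] e_le[of 1] lam_nonneg
      by (meson le_refl mult_left_mono order_trans)
    also have "\<dots> \<le> 2 * (real K * B) / (real 1 + 2)"
      using Kp lam_nonneg B0 by (intro base_arith) auto
    finally show ?case .
  next
    case (step m)
    have Em1: "E (m+1) \<le> lam * e (m+1)" using Emix step(1) by simp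
    show ?case
    proof (cases "m + 1 \<le> K")
      case True
      have "E (m+1) \<le> lam * B" using Em1 e_le[of "m+1"] lam_nonneg
        by (meson le_add2 mult_left_mono order_trans)
      also have "\<dots> \<le> 2 * (real K * B) / (real (m+1) + 2)"
        using Kp lam_nonneg B0 True by (intro base_arith) auto
      finally show ?thesis by simp
    next
      case False
      have "E (m+1) \<le> lam * ((1 - \<eta> m) * E m + \<eta> m * B)"
        using Em1 erec[OF step(1)] lam_nonneg by (meson mult_left_mono order_trans)
      also have "\<dots> = lam * ((1 - 2 / (real m + 2)) * E m + 2 / (real m + 2) * B)"
        using eta step(1) by simp
      also have "\<dots> \<le> 2 * (real K * B) / (real (m+1) + 2)"
        using Kp lam_nonneg B0 False E0 step by (intro step_arith) auto
      finally show ?thesis by simp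
    qed
  qed
  have dE: "norm (xh m i - xb m) \<le> E m" for m
    unfolding E_def using i by (intro member_le_L2_set) auto
  have xbd: "norm (xb (k+1) - xb k) \<le> \<eta> k * D"
  proof -
    have "xb (k+1) - xb k = \<eta> k *\<^sub>R (th k - xb k)" using xbstep[OF k] by (simp add: algebra_simps)
    hence "norm (xb (k+1) - xb k) = \<eta> k * norm (th k - xb k)" using eta01[OF k] by simp
    also have "\<dots> \<le> \<eta> k * D" using diam thX[OF k] xbX[OF k] eta01[OF k] by (simp add: mult_left_mono)
    finally show ?thesis .
  qed
  have "xh (k+1) i - xh k i = (xh (k+1) i - xb (k+1)) - (xh k i - xb k) + (xb (k+1) - xb k)" by simp
  hence "norm (xh (k+1) i - xh k i) \<le> norm (xh (k+1) i - xb (k+1)) + norm (xh k i - xb k) + norm (xb (k+1) - xb k)"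
    by (metis t5)
  also have "\<dots> \<le> 2 * (real K * B) / (real (k+1) + 2) + 2 * (real K * B) / (real k + 2) + \<eta> k * D"
    using dE[of "k+1"] dE[of k] Eb[of "k+1"] Eb[OF k] xbd k by (intro add_mono) auto
  also have "\<dots> \<le> 2 * (real K * B) / (real k + 2) + 2 * (real K * B) / (real k + 2) + 2 / (real k + 2) * D"
    using eta k B0 Kp by (intro add_mono frac_le) auto
  also have "\<dots> = 2 * (D + 2 * (real (k0_of lam) * sqrt (real n) * D)) / (real k + 2)"
    unfolding K_def B_def by (rule t4)
  finally show "norm (xh (k + 1) i - xh k i)
             \<le> 2 * (D + 2 * (real (k0_of lam) * sqrt (real n) * D)) / (real k + 2)" .
qed
end
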